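(* Let $p\geq 2$ be an integer, $r=\lceil\log_2(p-1)\rceil$, and $m\geq 2r+2$. Let $b,c\geq 1$ be integers with $b+c\leq r+1$. Then the number of columns $v\in\{0,1,2\}^m$ for which there are sets $I,J\subseteq[m]$ with $|I|=c$, $|J|=b$, $\max I<\min J$, such that the set of marks of $v$ is exactly $I\times J$ and every pair in $I\times J$ is scarce, is at most $2^r(r-b-c+1)+2^{b+c-2}\leq r2^r$.
   Context: For a column $v\in\{0,1,2\}^m$, a mark of $v$ is a pair $(i,j)$ with $1\leq i<j\leq m$, $v_i=0$ and $v_j=1$ (a 0 above a 1). A pair $(i,j)$ with $1\leq i<j\leq m$ is scarce if $2^{m-1+i-j}<p-1$. *)

theory Defs
  imports Complex_Main
begin

text \<open>A column v in {0,1,2}^m is a list of length m with entries in {0,1,2};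
  the entry v_i (1-based, 1 \<le> i \<le> m) is v ! (i - 1).\<close>

definition column :: "nat \<Rightarrow> nat list \<Rightarrow> bool" where
  "column m v \<longleftrightarrow> length v = m \<and> set v \<subseteq> {0,1,2}"

definition marks :: "nat \<Rightarrow> nat list \<Rightarrow> (nat \<times> nat) set" where
  "marks m v = {(i,j). 1 \<le> i \<and> i < j \<and> j \<le> m \<and> v ! (i - 1) = 0 \<and> v ! (j - 1) = 1}"

definition scarce :: "nat \<Rightarrow> nat \<Rightarrow> nat \<Rightarrow> nat \<Rightarrow> bool" where
  "scarce p m i j \<longleftrightarrow> 1 \<le> i \<and> i < j \<and> j \<le> m \<and>
     (2::int) ^ (m - 1 + i - j) < int p - 1"

end

theory Submission
  imports Defs
begin

lemma geo: "b \<le> Suc n \<Longrightarrow> (\<Sum>R=b..n. (2::nat)^R) + 2^b = 2^(Suc n)"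
proof (induction n)
  case 0
  then show ?case by (cases b) auto
next
  case (Suc n)
  show ?case
  proof (cases "b = Suc (Suc n)")
    case True
    then show ?thesis by simp
  next
    case False
    then have "b \<le> Suc n" using Suc.prems by simp
    then have "(\<Sum>R=b..Suc n. (2::nat)^R) = (\<Sum>R=b..n. 2^R) + 2^Suc n"
      by (simp add: sum.cl_ivl_Suc)
    then show ?thesis using Suc.IH[OF \<open>b \<le> Suc n\<close>] by simp
  qed
qed

lemma sumval:
  fixes b c r :: nat
  assumes "1 \<le> b" "1 \<le> c" "b + c \<le> r+1"
  shows "(\<Sum>L=c..r+1-b. \<Sum>R=b..r+1-L. (2::nat)^(L+R-2)) = 2^r*(r+1-b-c) + 2^(b+c-2)"
proof -
  have inner: "4*(\<Sum>R=b..r+1-L. (2::nat)^(L+R-2)) + 2^(L+b) = 2^(r+2)"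
    if L: "L \<in> {c..r+1-b}" for L
  proof -
    have "4*(\<Sum>R=b..r+1-L. (2::nat)^(L+R-2)) = (\<Sum>R=b..r+1-L. 4*2^(L+R-2))"
      by (simp add: sum_distrib_left)
    also have "\<dots> = (\<Sum>R=b..r+1-L. 2^L*2^R)"
    proof (rule sum.cong)
      fix R assume "R \<in> {b..r+1-L}"
      then have "L + R = (L+R-2) + 2" using L assms by auto
      then have "(2::nat)^(L+R) = 2^(L+R-2)*4" by (metis power_add power2_eq_square num_double numeral_times_numeral mult_2)
      then show "4 * 2 ^ (L + R - 2) = (2::nat)^L * 2^R" by (simp add: power_add)
    qed simp
    also have "\<dots> = 2^L * (\<Sum>R=b..r+1-L. 2^R)" by (simp add: sum_distrib_left)
    finally have e: "4*(\<Sum>R=b..r+1-L. (2::nat)^(L+R-2)) = 2^L * (\<Sum>R=b..r+1-L. 2^R)" .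
    have g: "(\<Sum>R=b..r+1-L. (2::nat)^R) + 2^b = 2^(Suc (r+1-L))"
      using L assms by (intro geo) auto
    have "L + Suc (r+1-L) = r+2" using L assms by auto
    then have "(2::nat)^L * 2^(Suc (r+1-L)) = 2^(r+2)"
      by (metis power_add)
    then show ?thesis using e g by (metis add_mult_distrib2 power_add)
  qed
  have outer: "(\<Sum>L=c..r+1-b. (2::nat)^(L+b)) + 2^(b+c) = 2^(r+2)"
  proof -
    have "(\<Sum>L=c..r+1-b. (2::nat)^L) + 2^c = 2^(Suc (r+1-b))"
      using assms by (intro geo) auto
    moreover have "(2::nat)^b * 2^(Suc (r+1-b)) = 2^(r+2)"
    proof -
      have "b + Suc (r+1-b) = r+2" using assms by simp
      then show ?thesis by (metis power_add)
    qed
    moreover have "(\<Sum>L=c..r+1-b. (2::nat)^(L+b)) = 2^b * (\<Sum>L=c..r+1-b. 2^L)"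
      by (simp add: power_add sum_distrib_left mult.commute)
    moreover have "(2::nat)^(b+c) = 2^b*2^c" by (rule power_add)
    ultimately show ?thesis by (metis add_mult_distrib2)
  qed
  define T where "T = (\<Sum>L=c..r+1-b. \<Sum>R=b..r+1-L. (2::nat)^(L+R-2))"
  define G where "G = (\<Sum>L=c..r+1-b. (2::nat)^(L+b))"
  define k where "k = r+1-b-c"
  have "(\<Sum>L=c..r+1-b. 4*(\<Sum>R=b..r+1-L. (2::nat)^(L+R-2)) + 2^(L+b)) = (\<Sum>L=c..r+1-b. 2^(r+2))"
    using inner by (rule sum.cong[OF refl])
  note hs = this
  have h1: "4*T + G = (k+1)*2^(r+2)"
  proof -
    have a: "(\<Sum>L=c..r+1-b. 4*(\<Sum>R=b..r+1-L. (2::nat)^(L+R-2)) + 2^(L+b)) = 4*T + G"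
      unfolding T_def G_def by (simp only: sum.distrib sum_distrib_left)
    have b: "(\<Sum>L=c..r+1-b. (2::nat)^(r+2)) = (k+1)*2^(r+2)"
    proof -
      have "Suc (r+1-b) - c = k+1" unfolding k_def using assms by simp
      then show ?thesis by simp
    qed
    show ?thesis using hs a b by simp
  qed
  have "(k+1)*2^(r+2) = 4*2^r + k*(4*2^r)" by (simp add: algebra_simps)
  have h2: "G + 4 * 2^(b+c-2) = 4*2^r"
  proof -
    have "b+c = (b+c-2)+2" using assms by simp
    then have "(2::nat)^(b+c) = 2^(b+c-2)*2^2" by (metis power_add)
    moreover have "(2::nat)^(r+2) = 2^r*2^2" by (rule power_add)
    ultimately show ?thesis using outer unfolding G_def by simp
  qed
  have "4*T = 4*(2^r*k + 2^(b+c-2))" using h1 h2 \<open>(k+1)*2^(r+2) = 4*2^r + k*(4*2^r)\<close> by (simp add: algebra_simps)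
  then show ?thesis unfolding T_def k_def by simp
qed


lemma mk: "(i,j) \<in> marks m v \<longleftrightarrow> 1 \<le> i \<and> i<j \<and> j \<le> m \<and> v!(i-1)=0 \<and> v!(j-1)=1"
  by (simp add: marks_def)

lemma up_unique:
  fixes Q Z Z' :: "nat set"
  assumes "finite Q" "Z \<subseteq> Q" "Z' \<subseteq> Q"
    and "\<forall>z\<in>Z. \<forall>q\<in>Q. z < q \<longrightarrow> q \<in> Z" "\<forall>z\<in>Z'. \<forall>q\<in>Q. z < q \<longrightarrow> q \<in> Z'"
    and "card Z = card Z'"
  shows "Z = Z'"
proof -
  have "Z \<subseteq> Z' \<or> Z' \<subseteq> Z"
  proof (rule ccontr)
    assume "\<not> ?thesis"
    then obtain x y where "x \<in> Z" "x \<notin> Z'" "y \<in> Z'" "y \<notin> Z" by blast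
    then show False using assms(2,3,4,5) by (cases x y rule: linorder_cases) auto
  qed
  moreover have "finite Z" "finite Z'" using assms(1,2,3) by (meson finite_subset)+
  ultimately show ?thesis using assms(6) by (metis card_subset_eq)
qed

lemma down_unique:
  fixes Q Z Z' :: "nat set"
  assumes "finite Q" "Z \<subseteq> Q" "Z' \<subseteq> Q"
    and "\<forall>z\<in>Z. \<forall>q\<in>Q. q < z \<longrightarrow> q \<in> Z" "\<forall>z\<in>Z'. \<forall>q\<in>Q. q < z \<longrightarrow> q \<in> Z'"
    and "card Z = card Z'"
  shows "Z = Z'"
proof -
  have "Z \<subseteq> Z' \<or> Z' \<subseteq> Z"
  proof (rule ccontr)
    assume "\<not> ?thesis"
    then obtain x y where "x \<in> Z" "x \<notin> Z'" "y \<in> Z'" "y \<notin> Z" by blast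
    then show False using assms(2,3,4,5) by (cases x y rule: linorder_cases) auto
  qed
  moreover have "finite Z" "finite Z'" using assms(1,2,3) by (meson finite_subset)+
  ultimately show ?thesis using assms(6) by (metis card_subset_eq)
qed

lemma struct:
  fixes m :: nat and v :: "nat list" and I J :: "nat set"
  assumes col: "column m v" and I: "I \<subseteq> {1..m}" and J: "J \<subseteq> {1..m}"
    and Ine: "I \<noteq> {}" and Jne: "J \<noteq> {}" and IJ: "Max I < Min J" and mv: "marks m v = I \<times> J"
  shows "Max (fst ` marks m v) = Max I" "Min (snd ` marks m v) = Min J"
    "v!(Max I - 1) = 0" "v!(Min J - 1) = 1"
    "\<And>i. Max I < i \<Longrightarrow> i < Min J \<Longrightarrow> v!(i-1) = 2"
    "{i\<in>{1..Max I}. v!(i-1) = 0} = I"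
    "{i\<in>{Min J..m}. v!(i-1) = 1} = J"
    "\<And>z q. z\<in>I \<Longrightarrow> q \<le> Max I \<Longrightarrow> z < q \<Longrightarrow> v!(q-1) \<noteq> 2 \<Longrightarrow> v!(q-1) = 0"
    "\<And>j q. j\<in>J \<Longrightarrow> Min J \<le> q \<Longrightarrow> q < j \<Longrightarrow> v!(q-1) \<noteq> 2 \<Longrightarrow> v!(q-1) = 1"
    "\<And>i. 1 \<le> i \<Longrightarrow> i \<le> m \<Longrightarrow> v!(i-1) \<in> {0,1,2}"
    "1 \<le> Max I" "Min J \<le> m"
proof -
  have fI: "finite I" and fJ: "finite J" using I J finite_subset by auto
  have aI: "Max I \<in> I" and dJ: "Min J \<in> J" using fI fJ Ine Jne by auto
  have leI: "i \<le> Max I" if "i \<in> I" for i using fI that by simp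
  have geJ: "Min J \<le> j" if "j \<in> J" for j using fJ that by simp
  show "Max (fst ` marks m v) = Max I" "Min (snd ` marks m v) = Min J"
    using mv Ine Jne by simp_all
  have ad: "(Max I, Min J) \<in> marks m v" using mv aI dJ by simp
  then show v0: "v!(Max I - 1) = 0" and v1: "v!(Min J - 1) = 1" and a1: "1 \<le> Max I" and dm: "Min J \<le> m"
    by (simp_all add: mk)
  show vals: "v!(i-1) \<in> {0,1,2}" if "1 \<le> i" "i \<le> m" for i
  proof -
    have "v!(i-1) \<in> set v" using col that unfolding column_def by (intro nth_mem) auto
    then show ?thesis using col unfolding column_def by auto
  qed
  show mid: "v!(i-1) = 2" if "Max I < i" "i < Min J" for i
  proof -
    have r: "v!(i-1) \<in> {0,1,2}" using vals that a1 dm by auto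
    have "v!(i-1) \<noteq> 0"
    proof
      assume "v!(i-1) = 0"
      then have "(i, Min J) \<in> marks m v" using that a1 dm v1 by (simp add: mk)
      then have "i \<in> I" using mv by auto
      then show False using leI that by fastforce
    qed
    moreover have "v!(i-1) \<noteq> 1"
    proof
      assume "v!(i-1) = 1"
      then have "(Max I, i) \<in> marks m v" using that a1 dm v0 by (simp add: mk)
      then have "i \<in> J" using mv by auto
      then show False using geJ that by fastforce
    qed
    ultimately show ?thesis using r by auto
  qed
  show "{i\<in>{1..Max I}. v!(i-1) = 0} = I"
  proof
    show "{i\<in>{1..Max I}. v!(i-1) = 0} \<subseteq> I"
    proof
      fix i assume "i \<in> {i\<in>{1..Max I}. v!(i-1) = 0}"
      then have "(i, Min J) \<in> marks m v" using IJ dm v1 by (auto simp: mk)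
      then show "i \<in> I" using mv by auto
    qed
    show "I \<subseteq> {i\<in>{1..Max I}. v!(i-1) = 0}"
    proof
      fix i assume "i \<in> I"
      then have "(i, Min J) \<in> marks m v" using mv dJ by auto
      then show "i \<in> {i\<in>{1..Max I}. v!(i-1) = 0}" using leI \<open>i \<in> I\<close> by (auto simp: mk)
    qed
  qed
  show "{i\<in>{Min J..m}. v!(i-1) = 1} = J"
  proof
    show "{i\<in>{Min J..m}. v!(i-1) = 1} \<subseteq> J"
    proof
      fix i assume "i \<in> {i\<in>{Min J..m}. v!(i-1) = 1}"
      then have "(Max I, i) \<in> marks m v" using IJ a1 v0 by (auto simp: mk)
      then show "i \<in> J" using mv by auto
    qed
    show "J \<subseteq> {i\<in>{Min J..m}. v!(i-1) = 1}"
    proof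
      fix i assume "i \<in> J"
      then have "(Max I, i) \<in> marks m v" using mv aI by auto
      then show "i \<in> {i\<in>{Min J..m}. v!(i-1) = 1}" using geJ \<open>i \<in> J\<close> by (auto simp: mk)
    qed
  qed
  show "v!(q-1) = 0" if "z\<in>I" "q \<le> Max I" "z < q" "v!(q-1) \<noteq> 2" for z q
  proof (rule ccontr)
    assume "v!(q-1) \<noteq> 0"
    have "(z, Min J) \<in> marks m v" using mv that(1) dJ by simp
    then have z1: "1 \<le> z" "v!(z-1) = 0" by (simp_all add: mk)
    have "v!(q-1) = 1" using vals[of q] that z1 \<open>v!(q-1) \<noteq> 0\<close> IJ dm by auto
    then have "(z, q) \<in> marks m v" using z1 that IJ dm by (simp add: mk)
    then have "q \<in> J" using mv by auto
    then show False using geJ that IJ by fastforce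
  qed
  show "v!(q-1) = 1" if "j\<in>J" "Min J \<le> q" "q < j" "v!(q-1) \<noteq> 2" for j q
  proof (rule ccontr)
    assume "v!(q-1) \<noteq> 1"
    have "(Max I, j) \<in> marks m v" using mv that(1) aI by simp
    then have j1: "j \<le> m" "v!(j-1) = 1" by (simp_all add: mk)
    have "v!(q-1) = 0" using vals[of q] that j1 \<open>v!(q-1) \<noteq> 1\<close> IJ a1 by auto
    then have "(q, j) \<in> marks m v" using j1 that IJ a1 by (simp add: mk)
    then have "q \<in> I" using mv by auto
    then show False using leI that IJ by fastforce
  qed
qed


theorem mainTheorem8:
  fixes p m b c r :: nat
  assumes "p \<ge> 2"
    and "r = nat \<lceil>log 2 (real p - 1)\<rceil>"
    and "m \<ge> 2 * r + 2"
    and "b \<ge> 1" and "c \<ge> 1" and "b + c \<le> r + 1"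
  shows "card {v. column m v \<and>
            (\<exists>I J. I \<subseteq> {1..m} \<and> J \<subseteq> {1..m} \<and> card I = c \<and> card J = b \<and>
                   Max I < Min J \<and> marks m v = I \<times> J \<and>
                   (\<forall>(i,j)\<in>I \<times> J. scarce p m i j))}
           \<le> 2 ^ r * (r + 1 - b - c) + 2 ^ (b + c - 2)
       \<and> 2 ^ r * (r + 1 - b - c) + 2 ^ (b + c - 2) \<le> r * 2 ^ r"
proof -
  define S where "S = {v. column m v \<and>
            (\<exists>I J. I \<subseteq> {1..m} \<and> J \<subseteq> {1..m} \<and> card I = c \<and> card J = b \<and>
                   Max I < Min J \<and> marks m v = I \<times> J \<and>
                   (\<forall>(i,j)\<in>I \<times> J. scarce p m i j))}"
  have pr: "int p - 1 \<le> 2^r"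
  proof -
    have p1: "real p - 1 \<ge> 1" using assms(1) by simp
    have "log 2 (real p - 1) \<ge> 0" using p1 by simp
    then have c0: "0 \<le> \<lceil>log 2 (real p - 1)\<rceil>" by linarith
    have "real r = real_of_int \<lceil>log 2 (real p - 1)\<rceil>" using assms(2) c0 by simp
    then have "log 2 (real p - 1) \<le> real r" using le_of_int_ceiling by simp
    then have "2 powr log 2 (real p - 1) \<le> 2 powr real r" by (intro powr_mono) auto
    then have "real p - 1 \<le> 2^r" using p1 by (simp add: powr_realpow)
    then have "real_of_int (int p - 1) \<le> real_of_int (2^r)" using assms(1) by simp
    then show ?thesis by (simp only: of_int_le_iff)
  qed
  have sc: "m - 1 + i - j < r" if "scarce p m i j" for i j
  proof -
    have "(2::int)^(m - 1 + i - j) < 2^r" using that pr unfolding scarce_def by linarith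
    then show ?thesis using power_less_imp_less_exp by fastforce
  qed
  define A where "A v = Max (fst ` marks m v)" for v
  define D where "D v = Min (snd ` marks m v)" for v
  define P where "P v = {i\<in>{1..m}. v!(i-1) \<noteq> 2} - {A v, D v}" for v
  define f where "f v = ((A v, m+1 - D v), P v)" for v
  define LR where "LR = Sigma {c..r+1-b} (\<lambda>L. {b..r+1-L})"
  define T where "T = Sigma LR (\<lambda>(L,R). Pow ({1..<L} \<union> {m+1-R<..m}))"
  have finLR: "finite LR" unfolding LR_def by auto
  have finT: "finite T" unfolding T_def using finLR by auto
  have maps: "f ` S \<subseteq> T"
  proof
    fix x assume "x \<in> f ` S"
    then obtain v where v: "v \<in> S" and x: "x = f v" by auto
    from v obtain I J where col: "column m v" and I: "I \<subseteq> {1..m}" and J: "J \<subseteq> {1..m}"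
      and cI: "card I = c" and cJ: "card J = b" and IJ: "Max I < Min J" and mv: "marks m v = I \<times> J"
      and scI: "\<forall>(i,j)\<in>I \<times> J. scarce p m i j" unfolding S_def by blast
    have Ine: "I \<noteq> {}" and Jne: "J \<noteq> {}" using cI cJ assms by auto
    note st = struct[OF col I J Ine Jne IJ mv]
    have fI: "finite I" and fJ: "finite J" using I J finite_subset by auto
    have aI: "Max I \<in> I" and dJ: "Min J \<in> J" using fI fJ Ine Jne by auto
    have Av: "A v = Max I" and Dv: "D v = Min J" using st(1,2) unfolding A_def D_def by auto
    have "m - 1 + Max I - Min J < r" using sc scI aI dJ by blast
    then have LRb: "Max I + (m + 1 - Min J) \<le> r + 1" using st(11,12) IJ by linarith
    have "I \<subseteq> {1..Max I}" using I fI by auto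
    then have "c \<le> Max I" using cI card_mono[of "{1..Max I}" I] by simp
    moreover have "J \<subseteq> {Min J..m}" using J fJ by auto
    then have "b \<le> m + 1 - Min J" using cJ card_mono[of "{Min J..m}" J] by simp
    ultimately have inLR: "(A v, m+1 - D v) \<in> LR" using LRb unfolding LR_def Av Dv by auto
    have "P v \<subseteq> {1..<A v} \<union> {m+1-(m+1-D v)<..m}"
    proof
      fix i assume i: "i \<in> P v"
      then have i1: "1 \<le> i" "i \<le> m" "v!(i-1) \<noteq> 2" "i \<noteq> Max I" "i \<noteq> Min J"
        unfolding P_def Av Dv by auto
      have "\<not> (Max I < i \<and> i < Min J)" using st(5) i1 by blast
      then show "i \<in> {1..<A v} \<union> {m+1-(m+1-D v)<..m}" using i1 st(12) unfolding Av Dv by auto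
    qed
    then show "x \<in> T" unfolding x f_def T_def using inLR by auto
  qed
  have inj: "inj_on f S"
  proof
    fix v w assume v: "v \<in> S" and w: "w \<in> S" and fe: "f v = f w"
    from v obtain I J where col: "column m v" and I: "I \<subseteq> {1..m}" and J: "J \<subseteq> {1..m}"
      and cI: "card I = c" and cJ: "card J = b" and IJ: "Max I < Min J" and mv: "marks m v = I \<times> J"
      unfolding S_def by blast
    from w obtain I' J' where col': "column m w" and I': "I' \<subseteq> {1..m}" and J': "J' \<subseteq> {1..m}"
      and cI': "card I' = c" and cJ': "card J' = b" and IJ': "Max I' < Min J'" and mw: "marks m w = I' \<times> J'"
      unfolding S_def by blast
    have Ine: "I \<noteq> {}" and Jne: "J \<noteq> {}" using cI cJ assms by auto
    have Ine': "I' \<noteq> {}" and Jne': "J' \<noteq> {}" using cI' cJ' assms by auto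
    note st = struct[OF col I J Ine Jne IJ mv]
    note st' = struct[OF col' I' J' Ine' Jne' IJ' mw]
    have Av: "A v = Max I" and Dv: "D v = Min J" using st(1,2) unfolding A_def D_def by auto
    have Aw: "A w = Max I'" and Dw: "D w = Min J'" using st'(1,2) unfolding A_def D_def by auto
    have aa: "Max I' = Max I" using fe Av Aw unfolding f_def by auto
    have "m + 1 - Min J = m + 1 - Min J'" using fe Dv Dw unfolding f_def by auto
    then have dd: "Min J' = Min J" using st(12) st'(12) by linarith
    have PP: "P v = P w" using fe unfolding f_def by auto
    define a where "a = Max I"
    define d where "d = Min J"
    have two: "v!(i-1) = 2 \<longleftrightarrow> w!(i-1) = 2" if "1 \<le> i" "i \<le> m" for i
    proof (cases "i = a \<or> i = d")
      case True
      then show ?thesis using st(3,4) st'(3,4) aa dd a_def d_def by auto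
    next
      case False
      then have "i \<in> P v \<longleftrightarrow> i \<in> P w" using PP by simp
      then show ?thesis using False that unfolding P_def Av Dv Aw Dw aa dd a_def d_def by auto
    qed
    have fQ: "finite {i\<in>{1..a}. v!(i-1) \<noteq> 2}" by auto
    have II: "I = I'"
    proof (rule up_unique[OF fQ])
      show "I \<subseteq> {i\<in>{1..a}. v!(i-1) \<noteq> 2}"
      proof
        fix x assume "x \<in> I"
        then have "x \<in> {i\<in>{1..Max I}. v!(i-1) = 0}" by (metis st(6))
        then show "x \<in> {i\<in>{1..a}. v!(i-1) \<noteq> 2}" unfolding a_def by auto
      qed
      show "I' \<subseteq> {i\<in>{1..a}. v!(i-1) \<noteq> 2}"
      proof
        fix x assume "x \<in> I'"
        then have x: "x \<in> {i\<in>{1..Max I'}. w!(i-1) = 0}" by (metis st'(6))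
        then have "x \<le> m" using st'(12) IJ' by simp
        then have "v!(x-1) \<noteq> 2" using two[of x] x by simp
        then show "x \<in> {i\<in>{1..a}. v!(i-1) \<noteq> 2}" using x unfolding a_def aa by simp
      qed
      show "\<forall>z\<in>I. \<forall>q\<in>{i\<in>{1..a}. v!(i-1) \<noteq> 2}. z < q \<longrightarrow> q \<in> I"
      proof (intro ballI impI)
        fix z q assume z: "z \<in> I" and q: "q \<in> {i\<in>{1..a}. v!(i-1) \<noteq> 2}" and zq: "z < q"
        have q': "q \<le> Max I" "v!(q-1) \<noteq> 2" "1 \<le> q" using q unfolding a_def by auto
        have "v!(q-1) = 0" using st(8)[OF z q'(1) zq q'(2)] .
        then have "q \<in> {i\<in>{1..Max I}. v!(i-1) = 0}" using q' by simp
        then show "q \<in> I" by (metis st(6))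
      qed
      show "\<forall>z\<in>I'. \<forall>q\<in>{i\<in>{1..a}. v!(i-1) \<noteq> 2}. z < q \<longrightarrow> q \<in> I'"
      proof (intro ballI impI)
        fix z q assume z: "z \<in> I'" and q: "q \<in> {i\<in>{1..a}. v!(i-1) \<noteq> 2}" and zq: "z < q"
        have q': "q \<le> Max I'" "v!(q-1) \<noteq> 2" "1 \<le> q" using q unfolding a_def aa by auto
        have qm: "q \<le> m" using q'(1) st'(12) IJ' by simp
        then have w2: "w!(q-1) \<noteq> 2" using q'(2,3) two by simp
        have "w!(q-1) = 0" using st'(8)[OF z q'(1) zq w2] .
        then have "q \<in> {i\<in>{1..Max I'}. w!(i-1) = 0}" using q' by simp
        then show "q \<in> I'" by (metis st'(6))
      qed
      show "card I = card I'" using cI cI' by simp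
    qed
    have fQ2: "finite {i\<in>{d..m}. v!(i-1) \<noteq> 2}" by auto
    have JJ: "J = J'"
    proof (rule down_unique[OF fQ2])
      show "J \<subseteq> {i\<in>{d..m}. v!(i-1) \<noteq> 2}"
      proof
        fix x assume "x \<in> J"
        then have "x \<in> {i\<in>{Min J..m}. v!(i-1) = 1}" by (metis st(7))
        then show "x \<in> {i\<in>{d..m}. v!(i-1) \<noteq> 2}" unfolding d_def by auto
      qed
      show "J' \<subseteq> {i\<in>{d..m}. v!(i-1) \<noteq> 2}"
      proof
        fix x assume "x \<in> J'"
        then have x: "x \<in> {i\<in>{Min J'..m}. w!(i-1) = 1}" by (metis st'(7))
        then have "1 \<le> x" using st'(11) IJ' by simp
        then have "v!(x-1) \<noteq> 2" using two[of x] x by simp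
        then show "x \<in> {i\<in>{d..m}. v!(i-1) \<noteq> 2}" using x unfolding d_def dd by simp
      qed
      show "\<forall>z\<in>J. \<forall>q\<in>{i\<in>{d..m}. v!(i-1) \<noteq> 2}. q < z \<longrightarrow> q \<in> J"
      proof (intro ballI impI)
        fix z q assume z: "z \<in> J" and q: "q \<in> {i\<in>{d..m}. v!(i-1) \<noteq> 2}" and zq: "q < z"
        have q': "Min J \<le> q" "v!(q-1) \<noteq> 2" "q \<le> m" using q unfolding d_def by auto
        have "v!(q-1) = 1" using st(9)[OF z q'(1) zq q'(2)] .
        then have "q \<in> {i\<in>{Min J..m}. v!(i-1) = 1}" using q' by simp
        then show "q \<in> J" by (metis st(7))
      qed
      show "\<forall>z\<in>J'. \<forall>q\<in>{i\<in>{d..m}. v!(i-1) \<noteq> 2}. q < z \<longrightarrow> q \<in> J'"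
      proof (intro ballI impI)
        fix z q assume z: "z \<in> J'" and q: "q \<in> {i\<in>{d..m}. v!(i-1) \<noteq> 2}" and zq: "q < z"
        have q': "Min J' \<le> q" "v!(q-1) \<noteq> 2" "q \<le> m" using q unfolding d_def dd by auto
        have q1: "1 \<le> q" using q'(1) st'(11) IJ' by simp
        then have w2: "w!(q-1) \<noteq> 2" using q'(2,3) two by simp
        have "w!(q-1) = 1" using st'(9)[OF z q'(1) zq w2] .
        then have "q \<in> {i\<in>{Min J'..m}. w!(i-1) = 1}" using q' by simp
        then show "q \<in> J'" by (metis st'(7))
      qed
      show "card J = card J'" using cJ cJ' by simp
    qed
    show "v = w"
    proof (rule nth_equalityI)
      show "length v = length w" using col col' unfolding column_def by simp
      fix k assume "k < length v"
      then have k: "k < m" using col unfolding column_def by simp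
      define i where "i = k + 1"
      have ik: "k = i - 1" "1 \<le> i" "i \<le> m" using k unfolding i_def by auto
      have vv: "v!(i-1) \<in> {0,1,2}" "w!(i-1) \<in> {0,1,2}" using st(10)[OF ik(2,3)] st'(10)[OF ik(2,3)] by auto
      show "v!k = w!k"
      proof (cases "v!(i-1) = 2")
        case True
        then show ?thesis using two ik by simp
      next
        case False
        then have F': "w!(i-1) \<noteq> 2" using two ik by simp
        consider "i \<le> a" | "d \<le> i" | "a < i \<and> i < d" by linarith
        then show ?thesis
        proof cases
          case 1
          have "v!(i-1) = 0 \<longleftrightarrow> i \<in> {i\<in>{1..Max I}. v!(i-1) = 0}" using 1 ik unfolding a_def by simp
          then have "v!(i-1) = 0 \<longleftrightarrow> i \<in> I" by (metis st(6))
          moreover have "w!(i-1) = 0 \<longleftrightarrow> i \<in> {i\<in>{1..Max I'}. w!(i-1) = 0}" using 1 ik unfolding a_def aa by simp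
          then have "w!(i-1) = 0 \<longleftrightarrow> i \<in> I'" by (metis st'(6))
          ultimately show ?thesis using II vv False F' ik by auto
        next
          case 2
          have "v!(i-1) = 1 \<longleftrightarrow> i \<in> {i\<in>{Min J..m}. v!(i-1) = 1}" using 2 ik unfolding d_def by simp
          then have "v!(i-1) = 1 \<longleftrightarrow> i \<in> J" by (metis st(7))
          moreover have "w!(i-1) = 1 \<longleftrightarrow> i \<in> {i\<in>{Min J'..m}. w!(i-1) = 1}" using 2 ik unfolding d_def dd by simp
          then have "w!(i-1) = 1 \<longleftrightarrow> i \<in> J'" by (metis st'(7))
          ultimately show ?thesis using JJ vv False F' ik by auto
        next
          case 3
          then have "v!(i-1) = 2" using st(5)[of i] unfolding a_def d_def by simp
          then show ?thesis using False by simp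
        qed
      qed
    qed
  qed
  have le1: "card S \<le> card T" using card_inj_on_le[OF inj maps finT] .
  have cT: "card T = (\<Sum>(L,R)\<in>LR. 2^(L+R-2))"
  proof -
    have "card T = (\<Sum>x\<in>LR. card ((\<lambda>(L,R). Pow ({1..<L} \<union> {m+1-R<..m})) x))"
      unfolding T_def using finLR by (intro card_SigmaI) auto
    also have "\<dots> = (\<Sum>(L,R)\<in>LR. 2^(L+R-2))"
    proof (rule sum.cong[OF refl])
      fix x assume x: "x \<in> LR"
      obtain L R where xe: "x = (L,R)" by fastforce
      have LR1: "c \<le> L" "b \<le> R" "L + R \<le> r + 1" using x unfolding xe LR_def by auto
      have "card ({1..<L} \<union> {m+1-R<..m}) = card {1..<L} + card {m+1-R<..m}"
        using LR1 assms by (intro card_Un_disjoint) auto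
      also have "\<dots> = L + R - 2" using LR1 assms by simp
      finally show "card ((\<lambda>(L,R). Pow ({1..<L} \<union> {m+1-R<..m})) x) = (\<lambda>(L,R). 2^(L+R-2)) x"
        unfolding xe by (simp add: card_Pow)
    qed
    finally show ?thesis .
  qed
  have "(\<Sum>(L,R)\<in>LR. (2::nat)^(L+R-2)) = (\<Sum>L=c..r+1-b. \<Sum>R=b..r+1-L. 2^(L+R-2))"
    unfolding LR_def by (subst sum.Sigma) auto
  also have "\<dots> = 2^r*(r+1-b-c) + 2^(b+c-2)" using sumval assms by simp
  finally have part1: "card S \<le> 2^r*(r+1-b-c) + 2^(b+c-2)" using le1 cT by simp
  have "(2::nat)^(b+c-2) \<le> 2^r" using assms by (intro power_increasing) auto
  then have "2 ^ r * (r + 1 - b - c) + 2 ^ (b + c - 2) \<le> 2 ^ r * (r + 1 - b - c) + (2::nat)^r"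
    by simp
  also have "\<dots> \<le> 2 ^ r * (r + 1 - b - c) + (b+c-1)*2^r" using assms by simp
  also have "\<dots> = ((r+1-b-c) + (b+c-1)) * 2^r" by (simp add: algebra_simps)
  also have "(r+1-b-c) + (b+c-1) = r" using assms by simp
  finally have part2: "2 ^ r * (r + 1 - b - c) + 2 ^ (b + c - 2) \<le> r * (2::nat) ^ r" .
  show ?thesis using part1 part2 unfolding S_def by simp
qed

end
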